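(* There exist an undirected graph $G=(V,E)$, pairs $(u_i,v_i)$ of distinct nodes of $V$, $1\le i\le4$, with $\sigma_{u_1v_1}=\sigma_{u_2v_2}=2$ and $\sigma_{u_3v_3}=\sigma_{u_4v_4}=1$, and values $x_1,\dots,x_4\in(0,1]$ such that the set $\{((u_i,v_i),x_i): 1\le i\le 4\}$ is shattered by $\{R_w: w\in V\}$.
   Context: $\mathcal{D}=\{(u,v)\in V\times V: u\ne v\}$. $\sigma_{uv}$ is the number of shortest paths from $u$ to $v$, $\sigma_{uv}(w)$ the number of those to which $w$ is internal ($w\ne u,v$, path through $w$); $f_w(u,v)=\sigma_{uv}(w)/\sigma_{uv}$ ($0$ if $\sigma_{uv}=0$). For $w\in V$, $R_w=\{((u,v),x)\in\mathcal{D}\times[0,1]: x\le f_w(u,v)\}$. A set $Q$ is shattered by a collection of sets $\mathcal{R}$ if $\{R\cap Q: R\in\mathcal{R}\}$ equals the power set of $Q$. *)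

theory Defs
  imports Complex_Main
begin

definition undirected_graph :: "'a set \<Rightarrow> ('a \<Rightarrow> 'a \<Rightarrow> bool) \<Rightarrow> bool" where
  "undirected_graph V E \<longleftrightarrow> finite V \<and> (\<forall>a b. E a b \<longrightarrow> a \<in> V \<and> b \<in> V)
     \<and> (\<forall>a b. E a b \<longrightarrow> E b a) \<and> (\<forall>a. \<not> E a a)"

definition is_path :: "'a set \<Rightarrow> ('a \<Rightarrow> 'a \<Rightarrow> bool) \<Rightarrow> 'a list \<Rightarrow> 'a \<Rightarrow> 'a \<Rightarrow> bool" where
  "is_path V E p u v \<longleftrightarrow> p \<noteq> [] \<and> hd p = u \<and> last p = v \<and> set p \<subseteq> V
     \<and> (\<forall>i. Suc i < length p \<longrightarrow> E (p ! i) (p ! Suc i))"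

definition shortest_paths :: "'a set \<Rightarrow> ('a \<Rightarrow> 'a \<Rightarrow> bool) \<Rightarrow> 'a \<Rightarrow> 'a \<Rightarrow> 'a list set" where
  "shortest_paths V E u v =
     {p. is_path V E p u v \<and> (\<forall>q. is_path V E q u v \<longrightarrow> length p \<le> length q)}"

definition sigma :: "'a set \<Rightarrow> ('a \<Rightarrow> 'a \<Rightarrow> bool) \<Rightarrow> 'a \<Rightarrow> 'a \<Rightarrow> nat" where
  "sigma V E u v = card (shortest_paths V E u v)"

definition sigma_through :: "'a set \<Rightarrow> ('a \<Rightarrow> 'a \<Rightarrow> bool) \<Rightarrow> 'a \<Rightarrow> 'a \<Rightarrow> 'a \<Rightarrow> nat" where
  "sigma_through V E u v w =
     (if w = u \<or> w = v then 0
      else card {p \<in> shortest_paths V E u v. w \<in> set (butlast (tl p))})"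

definition fw :: "'a set \<Rightarrow> ('a \<Rightarrow> 'a \<Rightarrow> bool) \<Rightarrow> 'a \<Rightarrow> 'a \<Rightarrow> 'a \<Rightarrow> real" where
  "fw V E w u v = (if sigma V E u v = 0 then 0
                   else real (sigma_through V E u v w) / real (sigma V E u v))"

definition Rw :: "'a set \<Rightarrow> ('a \<Rightarrow> 'a \<Rightarrow> bool) \<Rightarrow> 'a \<Rightarrow> (('a \<times> 'a) \<times> real) set" where
  "Rw V E w = {((u,v),x). u \<in> V \<and> v \<in> V \<and> u \<noteq> v \<and> 0 \<le> x \<and> x \<le> 1 \<and> x \<le> fw V E w u v}"

definition shattered :: "'b set \<Rightarrow> 'b set set \<Rightarrow> bool" where
  "shattered Q RR \<longleftrightarrow> (\<lambda>R. R \<inter> Q) ` RR = Pow Q"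

end

theory Submission
  imports Defs
begin

lemma is_path_Nil[simp]: "\<not> is_path V E [] u v"
  by (simp add: is_path_def)

lemma is_path_single[simp]: "is_path V E [x] u v \<longleftrightarrow> x = u \<and> x = v \<and> x \<in> V"
  by (auto simp add: is_path_def)

lemma is_path_Cons2:
  "is_path V E (x # y # ys) u v \<longleftrightarrow> x = u \<and> x \<in> V \<and> E x y \<and> is_path V E (y # ys) y v"
proof
  assume H: "is_path V E (x # y # ys) u v"
  have "E x y" using H unfolding is_path_def by (metis length_Cons nth_Cons_0 nth_Cons_Suc zero_less_Suc Suc_less_eq)
  moreover have "\<forall>i. Suc i < length (y#ys) \<longrightarrow> E ((y#ys) ! i) ((y#ys) ! Suc i)"
  proof (intro allI impI)
    fix i assume "Suc i < length (y#ys)"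
    then have "Suc (Suc i) < length (x#y#ys)" by simp
    then have "E ((x#y#ys) ! Suc i) ((x#y#ys) ! Suc (Suc i))" using H unfolding is_path_def by blast
    then show "E ((y#ys) ! i) ((y#ys) ! Suc i)" by simp
  qed
  ultimately show "x = u \<and> x \<in> V \<and> E x y \<and> is_path V E (y # ys) y v"
    using H unfolding is_path_def by auto
next
  assume H: "x = u \<and> x \<in> V \<and> E x y \<and> is_path V E (y # ys) y v"
  have "\<forall>i. Suc i < length (x#y#ys) \<longrightarrow> E ((x#y#ys) ! i) ((x#y#ys) ! Suc i)"
  proof (intro allI impI)
    fix i assume i: "Suc i < length (x#y#ys)"
    show "E ((x#y#ys) ! i) ((x#y#ys) ! Suc i)"
    proof (cases i)
      case 0 then show ?thesis using H by auto
    next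
      case (Suc j)
      then have "Suc j < length (y#ys)" using i by simp
      then have "E ((y#ys) ! j) ((y#ys) ! Suc j)" using H unfolding is_path_def by blast
      then show ?thesis using Suc by simp
    qed
  qed
  then show "is_path V E (x # y # ys) u v" using H unfolding is_path_def by auto
qed

lemma path_lb:
  assumes D0: "D v = 0" and Lip: "\<forall>a b. E a b \<longrightarrow> D a \<le> Suc (D b)"
  shows "is_path V E p a v \<Longrightarrow> Suc (D a) \<le> length p"
proof (induction p arbitrary: a)
  case Nil then show ?case by simp
next
  case (Cons x xs)
  show ?case
  proof (cases xs)
    case Nil then show ?thesis using Cons.prems D0 by auto
  next
    case (Cons y ys)
    then have "x = a" "E x y" "is_path V E xs y v" using Cons.prems by (auto simp add: is_path_Cons2)
    then have "Suc (D y) \<le> length xs" using Cons.IH by blast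
    moreover have "D a \<le> Suc (D y)" using Lip \<open>E x y\<close> \<open>x = a\<close> by blast
    ultimately show ?thesis by simp
  qed
qed

fun gen :: "('a \<Rightarrow> nat) \<Rightarrow> ('a \<Rightarrow> 'a list) \<Rightarrow> 'a \<Rightarrow> nat \<Rightarrow> 'a \<Rightarrow> 'a list list" where
  "gen D nb v 0 a = (if a = v then [[a]] else [])"
| "gen D nb v (Suc k) a = concat (map (\<lambda>b. map (Cons a) (gen D nb v k b)) (filter (\<lambda>b. D b = k) (nb a)))"

lemma gen_correct:
  assumes D0: "D v = 0" and Lip: "\<forall>a b. E a b \<longrightarrow> D a \<le> Suc (D b)"
    and nb: "\<forall>a b. E a b \<longleftrightarrow> b \<in> set (nb a)"
    and EV: "\<forall>a b. E a b \<longrightarrow> a \<in> V \<and> b \<in> V" and vV: "v \<in> V"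
  shows "D a = k \<Longrightarrow> set (gen D nb v k a) = {p. is_path V E p a v \<and> length p = Suc k}"
proof (induction k arbitrary: a)
  case 0
  show ?case
  proof (intro set_eqI iffI)
    fix p assume "p \<in> set (gen D nb v 0 a)"
    then show "p \<in> {p. is_path V E p a v \<and> length p = Suc 0}" using vV by (auto split: if_splits)
  next
    fix p assume "p \<in> {p. is_path V E p a v \<and> length p = Suc 0}"
    then obtain x where "p = [x]" "is_path V E [x] a v" by (auto simp: length_Suc_conv)
    then show "p \<in> set (gen D nb v 0 a)" by auto
  qed
next
  case (Suc k)
  show ?case
  proof (intro set_eqI iffI)
    fix p assume "p \<in> set (gen D nb v (Suc k) a)"
    then obtain b q where b: "b \<in> set (nb a)" "D b = k" and q: "q \<in> set (gen D nb v k b)" and p: "p = a # q"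
      by auto
    have qq: "is_path V E q b v \<and> length q = Suc k" using Suc.IH[OF b(2)] q by auto
    then obtain ys where ys: "q = b # ys" unfolding is_path_def by (cases q) auto
    have "E a b" using b nb by blast
    then have "a \<in> V" using EV by blast
    show "p \<in> {p. is_path V E p a v \<and> length p = Suc (Suc k)}"
      using qq ys p \<open>E a b\<close> \<open>a \<in> V\<close> by (simp add: is_path_Cons2)
  next
    fix p assume "p \<in> {p. is_path V E p a v \<and> length p = Suc (Suc k)}"
    then have pp: "is_path V E p a v" "length p = Suc (Suc k)" by auto
    then obtain x b ys where p: "p = x # b # ys" by (metis length_Suc_conv)
    then have "x = a" "E a b" "is_path V E (b#ys) b v" using pp by (auto simp add: is_path_Cons2)
    have "Suc (D b) \<le> length (b#ys)" using path_lb[OF D0 Lip] \<open>is_path V E (b#ys) b v\<close> by blast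
    moreover have "D a \<le> Suc (D b)" using Lip \<open>E a b\<close> by blast
    ultimately have Db: "D b = k" using pp(2) p Suc.prems by simp
    have "b # ys \<in> set (gen D nb v k b)" using Suc.IH[OF Db] \<open>is_path V E (b#ys) b v\<close> pp(2) p by auto
    moreover have "b \<in> set (filter (\<lambda>b. D b = k) (nb a))" using nb \<open>E a b\<close> Db by auto
    ultimately show "p \<in> set (gen D nb v (Suc k) a)" using p \<open>x = a\<close> by force
  qed
qed

lemma shortest_gen:
  assumes D0: "D v = 0" and Lip: "\<forall>a b. E a b \<longrightarrow> D a \<le> Suc (D b)"
    and nb: "\<forall>a b. E a b \<longleftrightarrow> b \<in> set (nb a)"
    and EV: "\<forall>a b. E a b \<longrightarrow> a \<in> V \<and> b \<in> V" and vV: "v \<in> V"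
    and ne: "gen D nb v (D u) u \<noteq> []"
  shows "shortest_paths V E u v = set (gen D nb v (D u) u)"
proof -
  have G: "set (gen D nb v (D u) u) = {p. is_path V E p u v \<and> length p = Suc (D u)}"
    using gen_correct[OF D0 Lip nb EV vV] by blast
  obtain p0 where "p0 \<in> set (gen D nb v (D u) u)" using ne by (cases "gen D nb v (D u) u") auto
  then have p0: "is_path V E p0 u v" "length p0 = Suc (D u)" using G by auto
  show ?thesis
  proof (intro set_eqI iffI)
    fix p assume "p \<in> shortest_paths V E u v"
    then have "is_path V E p u v" "length p \<le> length p0" using p0 unfolding shortest_paths_def by auto
    moreover have "Suc (D u) \<le> length p" using path_lb[OF D0 Lip] \<open>is_path V E p u v\<close> by blast
    ultimately show "p \<in> set (gen D nb v (D u) u)" using G p0 by auto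
  next
    fix p assume "p \<in> set (gen D nb v (D u) u)"
    then have "is_path V E p u v" "length p = Suc (D u)" using G by auto
    then show "p \<in> shortest_paths V E u v"
      unfolding shortest_paths_def using path_lb[OF D0 Lip] by auto
  qed
qed

lemma memb2:
  assumes S: "shortest_paths V E u v = {pa, pb}" and ne: "pa \<noteq> pb"
    and uv: "u \<in> V" "v \<in> V" "u \<noteq> v"
    and nu: "u \<notin> set (butlast (tl pa)) \<union> set (butlast (tl pb))"
    and nv: "v \<notin> set (butlast (tl pa)) \<union> set (butlast (tl pb))"
  shows "((u,v), 1/2) \<in> Rw V E w \<longleftrightarrow> w \<in> set (butlast (tl pa)) \<union> set (butlast (tl pb))"
proof -
  have sg: "sigma V E u v = 2" unfolding sigma_def S using ne by simp
  have "{p \<in> {pa, pb}. w \<in> set (butlast (tl p))} =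
        (if w \<in> set (butlast (tl pa)) then {pa} else {}) \<union> (if w \<in> set (butlast (tl pb)) then {pb} else {})"
    by auto
  then have c: "card {p \<in> {pa, pb}. w \<in> set (butlast (tl p))} =
      (if w \<in> set (butlast (tl pa)) then 1 else 0) + (if w \<in> set (butlast (tl pb)) then 1 else 0)"
    using ne by auto
  show ?thesis
    using uv nu nv c by (auto simp add: Rw_def fw_def sigma_through_def sg S)
qed

lemma memb1:
  assumes S: "shortest_paths V E u v = {pa}"
    and uv: "u \<in> V" "v \<in> V" "u \<noteq> v"
    and nu: "u \<notin> set (butlast (tl pa))"
    and nv: "v \<notin> set (butlast (tl pa))"
  shows "((u,v), 1) \<in> Rw V E w \<longleftrightarrow> w \<in> set (butlast (tl pa))"
proof -
  have sg: "sigma V E u v = 1" unfolding sigma_def S by simp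
  have "{p \<in> {pa}. w \<in> set (butlast (tl p))} = (if w \<in> set (butlast (tl pa)) then {pa} else {})"
    by auto
  then have c: "card {p \<in> {pa}. w \<in> set (butlast (tl p))} = (if w \<in> set (butlast (tl pa)) then 1 else 0)"
    by simp
  show ?thesis
    using uv nu nv c by (auto simp add: Rw_def fw_def sigma_through_def sg S)
qed


definition adjl :: "nat list list" where
  "adjl = [[1], [0, 2], [1, 3, 20], [2, 4, 15], [3, 5], [4, 6, 14], [5, 7, 16], [6, 8, 26], [7, 9], [8], [11], [10, 12], [11, 13, 23], [12, 14, 15], [5, 13], [3, 13], [6, 17, 22], [16, 18], [17], [20, 21], [2, 19], [19, 22], [16, 21], [12, 24], [23, 25], [24, 28], [7, 27], [26, 28], [25, 27]]"

definition GE :: "nat \<Rightarrow> nat \<Rightarrow> bool" where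
  "GE a b \<longleftrightarrow> a < 29 \<and> b \<in> set (adjl ! a)"

definition nbf :: "nat \<Rightarrow> nat list" where
  "nbf a = (if a < 29 then adjl ! a else [])"

definition dl1 :: "nat list" where "dl1 = [9, 8, 7, 6, 7, 6, 5, 4, 5, 6, 5, 4, 3, 4, 5, 5, 6, 7, 8, 9, 8, 8, 7, 2, 1, 0, 3, 2, 1]"
definition dl2 :: "nat list" where "dl2 = [9, 8, 7, 6, 5, 4, 3, 4, 5, 6, 9, 8, 7, 6, 5, 7, 2, 1, 0, 5, 6, 4, 3, 8, 9, 8, 5, 6, 7]"
definition dl3 :: "nat list" where "dl3 = [9, 8, 7, 6, 5, 4, 3, 2, 1, 0, 9, 8, 7, 6, 5, 7, 4, 5, 6, 7, 8, 6, 5, 8, 7, 6, 3, 4, 5]"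
definition D1 :: "nat \<Rightarrow> nat" where "D1 x = dl1 ! x"
definition D2 :: "nat \<Rightarrow> nat" where "D2 x = dl2 ! x"
definition D3 :: "nat \<Rightarrow> nat" where "D3 x = dl3 ! x"

lemma allGE: "(\<forall>a b. GE a b \<longrightarrow> P a b) \<longleftrightarrow> list_all (\<lambda>a. list_all (P a) (adjl ! a)) [0..<29]"
  by (auto simp: GE_def list_all_iff)

lemma nb_ok: "\<forall>a b. GE a b \<longleftrightarrow> b \<in> set (nbf a)"
  by (simp add: GE_def nbf_def)

lemma EV_ok0: "\<forall>a b. GE a b \<longrightarrow> a < 29 \<and> b < 29"
  unfolding allGE by code_simp

lemma EV_ok: "\<forall>a b. GE a b \<longrightarrow> a \<in> {0..<29::nat} \<and> b \<in> {0..<29}"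
  using EV_ok0 by simp

lemma graph_ok: "undirected_graph {0..<29::nat} GE"
proof -
  have "\<forall>a b. GE a b \<longrightarrow> GE b a"
    unfolding allGE unfolding GE_def by code_simp
  moreover have "\<forall>a b. GE a b \<longrightarrow> a \<noteq> b"
    unfolding allGE by code_simp
  ultimately show ?thesis using EV_ok unfolding undirected_graph_def by blast
qed

lemma Lip1: "\<forall>a b. GE a b \<longrightarrow> D1 a \<le> Suc (D1 b)"
  unfolding allGE D1_def by code_simp
lemma Lip2: "\<forall>a b. GE a b \<longrightarrow> D2 a \<le> Suc (D2 b)"
  unfolding allGE D2_def by code_simp
lemma Lip3: "\<forall>a b. GE a b \<longrightarrow> D3 a \<le> Suc (D3 b)"
  unfolding allGE D3_def by code_simp

lemma gen1: "gen D1 nbf 25 (D1 19) 19 = [[19, 20, 2, 3, 15, 13, 12, 23, 24, 25], [19, 21, 22, 16, 6, 7, 26, 27, 28, 25]]"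
  by code_simp
lemma gen2: "gen D2 nbf 18 (D2 15) 15 = [[15, 3, 4, 5, 6, 16, 17, 18], [15, 13, 14, 5, 6, 16, 17, 18]]"
  by code_simp
lemma gen3: "gen D3 nbf 9 (D3 0) 0 = [[0, 1, 2, 3, 4, 5, 6, 7, 8, 9]]"
  by code_simp
lemma gen4: "gen D3 nbf 9 (D3 10) 10 = [[10, 11, 12, 13, 14, 5, 6, 7, 8, 9]]"
  by code_simp

lemma sp1: "shortest_paths {0..<29} GE 19 25 = {[19, 20, 2, 3, 15, 13, 12, 23, 24, 25], [19, 21, 22, 16, 6, 7, 26, 27, 28, 25]}"
proof -
  have "D1 25 = 0" by (simp add: D1_def dl1_def)
  from shortest_gen[OF this Lip1 nb_ok EV_ok, of 19] gen1 show ?thesis by simp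
qed
lemma sp2: "shortest_paths {0..<29} GE 15 18 = {[15, 3, 4, 5, 6, 16, 17, 18], [15, 13, 14, 5, 6, 16, 17, 18]}"
proof -
  have "D2 18 = 0" by (simp add: D2_def dl2_def)
  from shortest_gen[OF this Lip2 nb_ok EV_ok, of 15] gen2 show ?thesis by simp
qed
lemma sp3: "shortest_paths {0..<29} GE 0 9 = {[0, 1, 2, 3, 4, 5, 6, 7, 8, 9]}"
proof -
  have "D3 9 = 0" by (simp add: D3_def dl3_def)
  from shortest_gen[OF this Lip3 nb_ok EV_ok, of 0] gen3 show ?thesis by simp
qed
lemma sp4: "shortest_paths {0..<29} GE 10 9 = {[10, 11, 12, 13, 14, 5, 6, 7, 8, 9]}"
proof -
  have "D3 9 = 0" by (simp add: D3_def dl3_def)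
  from shortest_gen[OF this Lip3 nb_ok EV_ok, of 10] gen4 show ?thesis by simp
qed


definition I1 :: "nat set" where "I1 = {20,2,3,15,13,12,23,24,21,22,16,6,7,26,27,28}"
definition I2 :: "nat set" where "I2 = {3,4,5,6,16,17,13,14}"
definition I3 :: "nat set" where "I3 = {1,2,3,4,5,6,7,8}"
definition I4 :: "nat set" where "I4 = {11,12,13,14,5,6,7,8}"

lemma m1: "(((19::nat),(25::nat)),(1/2::real)) \<in> Rw {0..<29} GE w \<longleftrightarrow> w \<in> I1"
  unfolding I1_def by (subst memb2[OF sp1]) auto
lemma m2: "(((15::nat),(18::nat)),(1/2::real)) \<in> Rw {0..<29} GE w \<longleftrightarrow> w \<in> I2"
  unfolding I2_def by (subst memb2[OF sp2]) auto
lemma m3: "(((0::nat),(9::nat)),(1::real)) \<in> Rw {0..<29} GE w \<longleftrightarrow> w \<in> I3"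
  unfolding I3_def by (subst memb1[OF sp3]) auto
lemma m4: "(((10::nat),(9::nat)),(1::real)) \<in> Rw {0..<29} GE w \<longleftrightarrow> w \<in> I4"
  unfolding I4_def by (subst memb1[OF sp4]) auto

definition tabf :: "bool \<Rightarrow> bool \<Rightarrow> bool \<Rightarrow> bool \<Rightarrow> nat" where
  "tabf b1 b2 b3 b4 = [0,11,1,8,17,14,4,5,15,12,2,7,16,13,3,6] !
     ((if b1 then 8 else 0) + (if b2 then 4 else 0) + (if b3 then 2 else 0) + (if b4 then 1 else 0))"

lemma tab_ok:
  fixes b1 b2 b3 b4 :: bool
  shows "tabf b1 b2 b3 b4 < 29 \<and> (tabf b1 b2 b3 b4 \<in> I1 \<longleftrightarrow> b1) \<and> (tabf b1 b2 b3 b4 \<in> I2 \<longleftrightarrow> b2)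
     \<and> (tabf b1 b2 b3 b4 \<in> I3 \<longleftrightarrow> b3) \<and> (tabf b1 b2 b3 b4 \<in> I4 \<longleftrightarrow> b4)"
  by (cases b1; cases b2; cases b3; cases b4) (simp_all add: tabf_def I1_def I2_def I3_def I4_def)

lemma shat:
  "shattered {(((19::nat),(25::nat)),(1/2::real)), ((15,18),1/2), ((0,9),1), ((10,9),1)} (Rw {0..<29} GE ` {0..<29})"
  (is "shattered ?Q _")
proof -
  have inter: "Rw {0..<29} GE w \<inter> ?Q =
    (if w \<in> I1 then {((19,25),1/2)} else {}) \<union> (if w \<in> I2 then {((15,18),1/2)} else {})
    \<union> (if w \<in> I3 then {((0,9),1)} else {}) \<union> (if w \<in> I4 then {((10,9),1)} else {})" for w
    using m1[of w] m2[of w] m3[of w] m4[of w] by auto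
  show ?thesis unfolding shattered_def
  proof (intro equalityI subsetI)
    fix S assume "S \<in> (\<lambda>R. R \<inter> ?Q) ` Rw {0..<29} GE ` {0..<29}"
    then show "S \<in> Pow ?Q" by auto
  next
    fix S assume "S \<in> Pow ?Q"
    then have SQ: "S \<subseteq> ?Q" by simp
    define w where "w = tabf (((19,25),1/2) \<in> S) (((15,18),1/2) \<in> S) (((0,9),1) \<in> S) (((10,9),1) \<in> S)"
    have t: "w < 29" "w \<in> I1 \<longleftrightarrow> ((19,25),1/2) \<in> S" "w \<in> I2 \<longleftrightarrow> ((15,18),1/2) \<in> S"
      "w \<in> I3 \<longleftrightarrow> ((0,9),1) \<in> S" "w \<in> I4 \<longleftrightarrow> ((10,9),1) \<in> S"
      using tab_ok unfolding w_def by blast+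
    have "S = Rw {0..<29} GE w \<inter> ?Q"
      unfolding inter using SQ t(2-5) by auto
    moreover have "w \<in> {0..<29}" using t(1) by simp
    ultimately show "S \<in> (\<lambda>R. R \<inter> ?Q) ` Rw {0..<29} GE ` {0..<29}" by blast
  qed
qed

theorem lemma4:
  shows "\<exists>(V :: nat set) E u1 v1 u2 v2 u3 v3 u4 v4 (x1::real) x2 x3 x4.
    undirected_graph V E \<and>
    {u1,v1,u2,v2,u3,v3,u4,v4} \<subseteq> V \<and>
    u1 \<noteq> v1 \<and> u2 \<noteq> v2 \<and> u3 \<noteq> v3 \<and> u4 \<noteq> v4 \<and>
    sigma V E u1 v1 = 2 \<and> sigma V E u2 v2 = 2 \<and>
    sigma V E u3 v3 = 1 \<and> sigma V E u4 v4 = 1 \<and>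
    x1 \<in> {0<..1} \<and> x2 \<in> {0<..1} \<and> x3 \<in> {0<..1} \<and> x4 \<in> {0<..1} \<and>
    card {((u1,v1),x1), ((u2,v2),x2), ((u3,v3),x3), ((u4,v4),x4)} = 4 \<and>
    shattered {((u1,v1),x1), ((u2,v2),x2), ((u3,v3),x3), ((u4,v4),x4)} (Rw V E ` V)"
  apply (rule exI[of _ "{0..<29}"], rule exI[of _ GE])
  apply (rule exI[of _ 19], rule exI[of _ 25], rule exI[of _ 15], rule exI[of _ 18])
  apply (rule exI[of _ 0], rule exI[of _ 9], rule exI[of _ 10], rule exI[of _ 9])
  apply (rule exI[of _ "1/2"], rule exI[of _ "1/2"], rule exI[of _ 1], rule exI[of _ 1])
  apply (intro conjI)
                 apply (rule graph_ok)
                apply simp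
               apply simp
              apply simp
             apply simp
            apply simp
           apply (simp add: sigma_def sp1)
          apply (simp add: sigma_def sp2)
         apply (simp add: sigma_def sp3)
        apply (simp add: sigma_def sp4)
       apply simp
      apply simp
     apply simp
    apply simp
   apply simp
  apply (rule shat)
  done

end
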